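(* Let $\mathcal{V},\bar{\mathcal{V}}$ be disjoint finite sets with $|\mathcal{V}|=N$, $|\bar{\mathcal{V}}|=M$, and let $G:2^{\mathcal{V}\cup\bar{\mathcal{V}}}\to\mathbb{R}$ be a submodular, nonnegative set function with $G(\emptyset)=0$ and $G(\mathcal{V}\cup\bar{\mathcal{V}})=0$, with Lovász extension $g(\mathbf{x},\bar{\mathbf{x}})$. Define $F:2^{\mathcal{V}}\to\mathbb{R}$ by $F(\mathcal{S})=\min_{\mathcal{T}\subseteq\bar{\mathcal{V}}}G(\mathcal{S}\cup\mathcal{T})-\min_{\mathcal{T}\subseteq\bar{\mathcal{V}}}G(\mathcal{T})$. Then the Lovász extension $f$ of $F$ satisfies $f(\mathbf{x})=\min_{\bar{\mathbf{x}}\in\mathbb{R}^M}g(\mathbf{x},\bar{\mathbf{x}})$ for all $\mathbf{x}\in\mathbb{R}^N$.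
   Context: Lovász extension: for a set function $F:2^{[n]}\to\mathbb{R}$ with $F(\emptyset)=0$, and $\mathbf{x}\in\mathbb{R}^n$ with entries sorted as $x_{i_1}\ge\cdots\ge x_{i_n}$, $f(\mathbf{x})=\sum_{j=1}^{n-1}F(\{i_1,\dots,i_j\})(x_{i_j}-x_{i_{j+1}})+F([n])x_{i_n}$. In $g(\mathbf{x},\bar{\mathbf{x}})$, $\mathbf{x}\in\mathbb{R}^N$ is indexed by $\mathcal{V}$ and $\bar{\mathbf{x}}\in\mathbb{R}^M$ by $\bar{\mathcal{V}}$. Submodularity: $F(\mathcal{S}_1)+F(\mathcal{S}_2)\ge F(\mathcal{S}_1\cup\mathcal{S}_2)+F(\mathcal{S}_1\cap\mathcal{S}_2)$. *)

theory Defs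
  imports Main Complex_Main
begin

text \<open>Lovasz extension of a set function F on the finite ground set U, evaluated at a
vector x indexed by U (values of x outside U are irrelevant).\<close>

definition lovasz :: "'a set \<Rightarrow> ('a set \<Rightarrow> real) \<Rightarrow> ('a \<Rightarrow> real) \<Rightarrow> real" where
  "lovasz U F x =
    (let n = card U;
         s = (SOME s. bij_betw s {1..n} U \<and>
                (\<forall>i j. 1 \<le> i \<longrightarrow> i \<le> j \<longrightarrow> j \<le> n \<longrightarrow> x (s j) \<le> x (s i)))
     in (\<Sum>j=1..<n. F (s ` {1..j}) * (x (s j) - x (s (Suc j)))) + F U * x (s n))"

definition submodular_on :: "'a set \<Rightarrow> ('a set \<Rightarrow> real) \<Rightarrow> bool" where
  "submodular_on U G \<longleftrightarrow>
    (\<forall>S1 S2. S1 \<subseteq> U \<longrightarrow> S2 \<subseteq> U \<longrightarrow> G S1 + G S2 \<ge> G (S1 \<union> S2) + G (S1 \<inter> S2))"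

end

theory Submission
  imports Defs "HOL-Analysis.Analysis"
begin

lemma sort_exists:
  fixes z :: "'a \<Rightarrow> real"
  assumes "finite U"
  shows "\<exists>s. bij_betw s {1..card U} U \<and>
           (\<forall>i j. 1 \<le> i \<longrightarrow> i \<le> j \<longrightarrow> j \<le> card U \<longrightarrow> z (s j) \<le> z (s i))"
proof -
  obtain xs where xs: "set xs = U" "distinct xs" using finite_distinct_list[OF assms] by blast
  define ys where "ys = sort_key (\<lambda>u. - z u) xs"
  have ys: "set ys = U" "distinct ys" using xs by (auto simp: ys_def)
  have len: "length ys = card U" using ys distinct_card by fastforce
  have so: "sorted (map (\<lambda>u. - z u) ys)" by (simp add: ys_def)
  define s where "s i = ys ! (i - 1)" for i
  have "bij_betw s {1..card U} U"
  proof (rule bij_betw_imageI)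
    show "inj_on s {1..card U}"
      unfolding inj_on_def s_def using ys(2) len
      by (auto simp: nth_eq_iff_index_eq)
    show "s ` {1..card U} = U"
    proof
      show "s ` {1..card U} \<subseteq> U" using len ys(1) by (auto simp: s_def)
      show "U \<subseteq> s ` {1..card U}"
      proof
        fix u assume "u \<in> U"
        then obtain k where k: "k < length ys" "ys ! k = u" using ys(1) by (metis in_set_conv_nth)
        then have "s (Suc k) = u" "Suc k \<in> {1..card U}" using len by (auto simp: s_def)
        then show "u \<in> s ` {1..card U}" by blast
      qed
    qed
  qed
  moreover have "\<forall>i j. 1 \<le> i \<longrightarrow> i \<le> j \<longrightarrow> j \<le> card U \<longrightarrow> z (s j) \<le> z (s i)"
  proof (intro allI impI)
    fix i j :: nat assume h: "1 \<le> i" "i \<le> j" "j \<le> card U"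
    have "map (\<lambda>u. - z u) ys ! (i-1) \<le> map (\<lambda>u. - z u) ys ! (j-1)"
      using so h len by (intro sorted_nth_mono) auto
    then show "z (s j) \<le> z (s i)" using h len by (simp add: s_def)
  qed
  ultimately show ?thesis by blast
qed

lemma lovasz_integral:
  fixes H :: "'a set \<Rightarrow> real" and z :: "'a \<Rightarrow> real"
  assumes fin: "finite U" and HU: "H U = 0" and H0: "H {} = 0"
    and ab: "\<And>u. u \<in> U \<Longrightarrow> a \<le> z u \<and> z u \<le> b"
  shows "((\<lambda>t. H {u\<in>U. t \<le> z u}) has_integral lovasz U H z) {a..b}"
proof (cases "U = {}")
  case True
  then show ?thesis using H0 by (simp add: lovasz_def)
next
  case False
  define n where "n = card U"
  have n1: "1 \<le> n" using False fin by (simp add: n_def Suc_le_eq card_gt_0_iff)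
  define s where "s = (SOME s. bij_betw s {1..n} U \<and>
                (\<forall>i j. 1 \<le> i \<longrightarrow> i \<le> j \<longrightarrow> j \<le> n \<longrightarrow> z (s j) \<le> z (s i)))"
  have "\<exists>s. bij_betw s {1..n} U \<and>
                (\<forall>i j. 1 \<le> i \<longrightarrow> i \<le> j \<longrightarrow> j \<le> n \<longrightarrow> z (s j) \<le> z (s i))"
    using sort_exists[OF fin] n_def by simp
  then have sp: "bij_betw s {1..n} U \<and>
                (\<forall>i j. 1 \<le> i \<longrightarrow> i \<le> j \<longrightarrow> j \<le> n \<longrightarrow> z (s j) \<le> z (s i))"
    unfolding s_def by (rule someI_ex)
  then have bij: "bij_betw s {1..n} U"
    and mono: "\<And>i j. 1 \<le> i \<Longrightarrow> i \<le> j \<Longrightarrow> j \<le> n \<Longrightarrow> z (s j) \<le> z (s i)" by auto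
  have L: "lovasz U H z = (\<Sum>j=1..<n. H (s ` {1..j}) * (z (s j) - z (s (Suc j))))"
    unfolding lovasz_def Let_def n_def[symmetric] s_def[symmetric] using HU by simp
  define h where "h t = H {u\<in>U. t \<le> z u}" for t
  have sU: "\<And>i. i \<in> {1..n} \<Longrightarrow> s i \<in> U" using bij bij_betwE by blast
  have Us: "\<And>u. u \<in> U \<Longrightarrow> \<exists>i\<in>{1..n}. u = s i" using bij bij_betw_imp_surj_on by blast
  have lev: "h t = H (s ` {1..k})" if k: "1 \<le> k" "k < n" and t: "z (s (Suc k)) < t" "t \<le> z (s k)" for k t
  proof -
    have "{u\<in>U. t \<le> z u} = s ` {1..k}"
    proof
      show "{u\<in>U. t \<le> z u} \<subseteq> s ` {1..k}"
      proof
        fix u assume "u \<in> {u\<in>U. t \<le> z u}"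
        then obtain i where i: "i \<in> {1..n}" "u = s i" "t \<le> z u" using Us by blast
        have "i \<le> k"
        proof (rule ccontr)
          assume "\<not> i \<le> k"
          then have "z (s i) \<le> z (s (Suc k))" using mono[of "Suc k" i] i by auto
          then show False using i t by auto
        qed
        then show "u \<in> s ` {1..k}" using i by auto
      qed
      show "s ` {1..k} \<subseteq> {u\<in>U. t \<le> z u}"
      proof
        fix u assume "u \<in> s ` {1..k}"
        then obtain i where i: "i \<in> {1..k}" "u = s i" by blast
        then have "z (s k) \<le> z u" using mono[of i k] k by auto
        then show "u \<in> {u\<in>U. t \<le> z u}" using i sU k t by auto
      qed
    qed
    then show ?thesis by (simp add: h_def)
  qed
  have piece: "(h has_integral (H (s ` {1..k}) * (z (s k) - z (s (Suc k))))) {z (s (Suc k))..z (s k)}"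
    if k: "1 \<le> k" "k < n" for k
  proof -
    have le: "z (s (Suc k)) \<le> z (s k)" using mono[of k "Suc k"] k by auto
    have "((\<lambda>t. H (s ` {1..k})) has_integral (Henstock_Kurzweil_Integration.content {z (s (Suc k))..z (s k)} *\<^sub>R H (s ` {1..k}))) {z (s (Suc k))..z (s k)}"
      by (rule has_integral_const_real)
    then have c: "((\<lambda>t. H (s ` {1..k})) has_integral (H (s ` {1..k}) * (z (s k) - z (s (Suc k))))) {z (s (Suc k))..z (s k)}"
      using le by (simp add: mult.commute)
    show ?thesis
      by (intro has_integral_spike_finite[where S="{z (s (Suc k))}", OF _ _ c]) (use lev k in auto)
  qed
  have mid: "(h has_integral (\<Sum>j=1..<k. H (s ` {1..j}) * (z (s j) - z (s (Suc j))))) {z (s k)..z (s 1)}"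
    if "1 \<le> k" "k \<le> n" for k
    using that
  proof (induction k rule: dec_induct)
    case base
    then show ?case using has_integral_refl(2)[of h "z (s 1)"] by simp
  next
    case (step k)
    have "(h has_integral (H (s ` {1..k}) * (z (s k) - z (s (Suc k))) + (\<Sum>j=1..<k. H (s ` {1..j}) * (z (s j) - z (s (Suc j)))))) {z (s (Suc k))..z (s 1)}"
      by (rule has_integral_combine[OF _ _ piece step.IH]) (use step mono in auto)
    then show ?case using step by (simp add: add.commute)
  qed
  have left: "(h has_integral 0) {a..z (s n)}"
  proof -
    have "h t = 0" if "t \<le> z (s n)" for t
    proof -
      have "{u\<in>U. t \<le> z u} = U"
      proof (auto)
        fix u assume "u \<in> U"
        then obtain i where "i \<in> {1..n}" "u = s i" using Us by blast
        then show "t \<le> z u" using mono[of i n] that by auto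
      qed
      then show ?thesis using HU by (simp add: h_def)
    qed
    then show ?thesis by (intro has_integral_eq[OF _ has_integral_0]) auto
  qed
  have right: "(h has_integral 0) {z (s 1)..b}"
  proof -
    have "h t = 0" if "z (s 1) < t" for t
    proof -
      have "{u\<in>U. t \<le> z u} = {}"
      proof (auto)
        fix u assume "u \<in> U" "t \<le> z u"
        then obtain i where "i \<in> {1..n}" "u = s i" using Us by blast
        then show False using mono[of 1 i] that \<open>t \<le> z u\<close> by auto
      qed
      then show ?thesis using H0 unfolding h_def by metis
    qed
    then show ?thesis by (intro has_integral_spike_finite[where S="{z (s 1)}", OF _ _ has_integral_0]) auto
  qed
  have an: "a \<le> z (s n)" "z (s 1) \<le> b" using ab sU n1 by auto
  have sn1: "z (s n) \<le> z (s 1)" using mono n1 by auto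
  have "(h has_integral (0 + (\<Sum>j=1..<n. H (s ` {1..j}) * (z (s j) - z (s (Suc j)))))) {a..z (s 1)}"
    by (rule has_integral_combine[OF an(1) sn1 left mid[OF n1 order.refl]])
  from has_integral_combine[OF _ an(2) this right] an sn1 have "(h has_integral ((0 + (\<Sum>j=1..<n. H (s ` {1..j}) * (z (s j) - z (s (Suc j))))) + 0)) {a..b}"
    by auto
  then show ?thesis using L by (simp add: h_def[abs_def])
qed

theorem lemma4:
  fixes V Vb :: "'a set" and G :: "'a set \<Rightarrow> real" and F :: "'a set \<Rightarrow> real"
    and x :: "'a \<Rightarrow> real"
  assumes "finite V" and "finite Vb" and "V \<inter> Vb = {}"
    and "submodular_on (V \<union> Vb) G"
    and "\<And>S. S \<subseteq> V \<union> Vb \<Longrightarrow> G S \<ge> 0"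
    and "G {} = 0" and "G (V \<union> Vb) = 0"
    and "\<And>S. F S = (MIN T\<in>Pow Vb. G (S \<union> T)) - (MIN T\<in>Pow Vb. G T)"
  shows "(\<exists>xb :: 'a \<Rightarrow> real.
            lovasz (V \<union> Vb) G (\<lambda>i. if i \<in> V then x i else xb i) = lovasz V F x)
       \<and> (\<forall>xb :: 'a \<Rightarrow> real.
            lovasz V F x \<le> lovasz (V \<union> Vb) G (\<lambda>i. if i \<in> V then x i else xb i))"
proof -
  note finV = assms(1) and finVb = assms(2) and disj = assms(3) and sub = assms(4)
    and Gnn = assms(5) and G0 = assms(6) and GU = assms(7)
  have finP: "finite (Pow Vb)" using finVb by simp
  have m0: "(MIN T\<in>Pow Vb. G T) = 0"
  proof (rule antisym)
    show "(MIN T\<in>Pow Vb. G T) \<le> 0" using G0 finP by (metis Min_le Pow_bottom finite_imageI image_eqI)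
    show "0 \<le> (MIN T\<in>Pow Vb. G T)" using finP Gnn by (auto intro!: Min.boundedI)
  qed
  have Fd: "F S = (MIN T\<in>Pow Vb. G (S \<union> T))" for S using assms(8) m0 by simp
  have Fle: "F S \<le> G (S \<union> T)" if "T \<subseteq> Vb" for S T
    unfolding Fd using finP that by (intro Min_le) auto
  have Fatt: "\<exists>T. T \<subseteq> Vb \<and> G (S \<union> T) = F S" for S
  proof -
    have "F S \<in> (\<lambda>T. G (S \<union> T)) ` Pow Vb" unfolding Fd using finP by (intro Min_in) auto
    then show ?thesis by auto
  qed
  have F0: "F {} = 0" using Fd m0 by simp
  have FV: "F V = 0"
  proof (rule antisym)
    show "F V \<le> 0" using Fle[of Vb V] GU by simp
    obtain T where "T \<subseteq> Vb" "G (V \<union> T) = F V" using Fatt by blast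
    then show "0 \<le> F V" using Gnn[of "V \<union> T"] by auto
  qed
  define z where "z xb = (\<lambda>i. if i \<in> V then x i else xb i)" for xb :: "'a \<Rightarrow> real"
  define A where "A xb = (\<Sum>u\<in>V \<union> Vb. \<bar>z xb u\<bar>)" for xb
  have finU: "finite (V \<union> Vb)" using finV finVb by simp
  have zb: "- A xb \<le> z xb u \<and> z xb u \<le> A xb" if "u \<in> V \<union> Vb" for xb u
  proof -
    have "\<bar>z xb u\<bar> \<le> A xb" unfolding A_def using finU that
      by (intro member_le_sum) auto
    then show ?thesis by auto
  qed
  have xb: "- A xb \<le> x u \<and> x u \<le> A xb" if "u \<in> V" for xb u
    using zb[of u xb] that by (simp add: z_def)
  have IF: "((\<lambda>t. F {u\<in>V. t \<le> x u}) has_integral lovasz V F x) {- A xb..A xb}" for xb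
    by (rule lovasz_integral[OF finV FV F0]) (use xb in auto)
  have IG: "((\<lambda>t. G {u\<in>V \<union> Vb. t \<le> z xb u}) has_integral lovasz (V \<union> Vb) G (z xb)) {- A xb..A xb}" for xb
    by (rule lovasz_integral[OF finU GU G0]) (use zb in auto)
  have split: "{u\<in>V \<union> Vb. t \<le> z xb u} = {u\<in>V. t \<le> x u} \<union> {u\<in>Vb. t \<le> xb u}" for xb t
    using disj by (auto simp: z_def)
  have part2: "\<forall>xb. lovasz V F x \<le> lovasz (V \<union> Vb) G (z xb)"
  proof
    fix xb
    show "lovasz V F x \<le> lovasz (V \<union> Vb) G (z xb)"
      by (rule has_integral_le[OF IF IG], unfold split, rule Fle, blast)
  qed
  have eqI: "lovasz (V \<union> Vb) G (z xb) = lovasz V F x"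
    if h: "\<And>t. G {u\<in>V \<union> Vb. t \<le> z xb u} = F {u\<in>V. t \<le> x u}" for xb
  proof -
    have "((\<lambda>t. F {u\<in>V. t \<le> x u}) has_integral lovasz (V \<union> Vb) G (z xb)) {- A xb..A xb}"
      using IG[of xb] h by simp
    then show ?thesis using IF[of xb] by (rule has_integral_unique)
  qed
  define P where "P S T \<longleftrightarrow> T \<subseteq> Vb \<and> G (S \<union> T) = F S \<and>
      (\<forall>T'. T' \<subseteq> Vb \<longrightarrow> G (S \<union> T') = F S \<longrightarrow> card T' \<le> card T)" for S T
  have Pex: "\<exists>T. P S T" for S
  proof -
    define M where "M = {T\<in>Pow Vb. G (S \<union> T) = F S}"
    have finM: "finite M" using finP by (simp add: M_def)
    have neM: "M \<noteq> {}" using Fatt[of S] by (auto simp: M_def)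
    have "Max (card ` M) \<in> card ` M" using finM neM by (intro Max_in) auto
    then obtain T where T: "T \<in> M" "card T = Max (card ` M)" by auto
    have "P S T" unfolding P_def
    proof (intro conjI allI impI)
      show "T \<subseteq> Vb" "G (S \<union> T) = F S" using T by (auto simp: M_def)
      fix T' assume "T' \<subseteq> Vb" "G (S \<union> T') = F S"
      then have "T' \<in> M" by (auto simp: M_def)
      then show "card T' \<le> card T" using T finM by simp
    qed
    then show ?thesis by blast
  qed
  define Tst where "Tst S = (SOME T. P S T)" for S
  have PT: "P S (Tst S)" for S unfolding Tst_def using Pex by (rule someI_ex)
  have TstV: "Tst V = Vb"
  proof -
    have "card Vb \<le> card (Tst V)" using PT[of V] GU FV by (simp add: P_def)
    moreover have "Tst V \<subseteq> Vb" using PT[of V] by (simp add: P_def)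
    ultimately show ?thesis using finVb by (metis card_seteq)
  qed
  have Tmono: "Tst S \<subseteq> Tst S'" if SS: "S \<subseteq> S'" "S' \<subseteq> V" for S S'
  proof -
    define T where "T = Tst S"
    define T' where "T' = Tst S'"
    have T: "T \<subseteq> Vb" "G (S \<union> T) = F S" using PT[of S] by (auto simp: P_def T_def)
    have T': "T' \<subseteq> Vb" "G (S' \<union> T') = F S'"
      "\<And>T''. T'' \<subseteq> Vb \<Longrightarrow> G (S' \<union> T'') = F S' \<Longrightarrow> card T'' \<le> card T'"
      using PT[of S'] by (auto simp: P_def T'_def)
    have "G (S \<union> T) + G (S' \<union> T') \<ge> G ((S \<union> T) \<union> (S' \<union> T')) + G ((S \<union> T) \<inter> (S' \<union> T'))"
    proof -
      have "S \<union> T \<subseteq> V \<union> Vb" "S' \<union> T' \<subseteq> V \<union> Vb" using SS T T' by auto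
      then show ?thesis using sub unfolding submodular_on_def by blast
    qed
    moreover have "(S \<union> T) \<union> (S' \<union> T') = S' \<union> (T \<union> T')" using SS by auto
    moreover have "(S \<union> T) \<inter> (S' \<union> T') = S \<union> (T \<inter> T')" using SS T T' disj by auto
    moreover have "F S \<le> G (S \<union> (T \<inter> T'))" using T by (intro Fle) auto
    moreover have "F S' \<le> G (S' \<union> (T \<union> T'))" using T T' by (intro Fle) auto
    ultimately have "G (S' \<union> (T \<union> T')) + G (S \<union> (T \<inter> T')) \<le> G (S \<union> T) + G (S' \<union> T')"
      "F S \<le> G (S \<union> (T \<inter> T'))" "F S' \<le> G (S' \<union> (T \<union> T'))" by simp_all
    then have "G (S' \<union> (T \<union> T')) = F S'" using T T' by linarith
    then have "card (T \<union> T') \<le> card T'" using T T' by auto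
    then have "T \<union> T' = T'" using finVb T T'
      by (metis card_seteq finite_subset sup.cobounded2 sup.bounded_iff)
    then show ?thesis unfolding T_def T'_def by auto
  qed
  have part1: "\<exists>xb. lovasz (V \<union> Vb) G (z xb) = lovasz V F x"
  proof (cases "V = {}")
    case True
    have "G {u\<in>V \<union> Vb. t \<le> z (\<lambda>_. 0) u} = F {u\<in>V. t \<le> x u}" for t
    proof (cases "t \<le> 0")
      case True
      then have "{u\<in>V \<union> Vb. t \<le> z (\<lambda>_. 0) u} = V \<union> Vb" using \<open>V = {}\<close> by (auto simp: z_def)
      then show ?thesis using GU F0 \<open>V = {}\<close> by simp
    next
      case False
      then have e: "{u\<in>V \<union> Vb. t \<le> z (\<lambda>_. 0) u} = {}" using \<open>V = {}\<close> by (auto simp: z_def)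
      show ?thesis unfolding e using G0 F0 \<open>V = {}\<close> by simp
    qed
    then show ?thesis using eqI by blast
  next
    case False
    define Sx where "Sx t = {u\<in>V. t \<le> x u}" for t
    define Q where "Q b = {x u | u. u \<in> V \<and> b \<in> Tst (Sx (x u))}" for b
    define xb where "xb b = Max (Q b)" for b
    have finQ: "finite (Q b)" for b
    proof -
      have "Q b \<subseteq> x ` V" by (auto simp: Q_def)
      then show ?thesis using finV finite_subset by blast
    qed
    have "Min (x ` V) \<in> x ` V" using False finV by (intro Min_in) auto
    then obtain u0 where u0: "u0 \<in> V" "x u0 = Min (x ` V)" by (metis imageE)
    have Sx0: "Sx (x u0) = V" using u0 finV by (auto simp: Sx_def)
    have inQ: "x u0 \<in> Q b" if "b \<in> Vb" for b
    proof -
      have "b \<in> Tst (Sx (x u0))" using that Sx0 TstV by simp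
      then show ?thesis using u0(1) unfolding Q_def by blast
    qed
    have Sxmono: "Sx t' \<subseteq> Sx t" if "t \<le> t'" for t t' using that by (auto simp: Sx_def)
    have SxV: "Sx t \<subseteq> V" for t by (auto simp: Sx_def)
    have key: "G {u\<in>V \<union> Vb. t \<le> z xb u} = F (Sx t)" for t
    proof (cases "\<exists>u\<in>V. t \<le> x u")
      case True
      define v where "v = Min {x u | u. u \<in> V \<and> t \<le> x u}"
      have finW: "finite {x u | u. u \<in> V \<and> t \<le> x u}" using finV by simp
      have "v \<in> {x u | u. u \<in> V \<and> t \<le> x u}" unfolding v_def using True finW by (intro Min_in) auto
      then obtain u1 where u1: "u1 \<in> V" "t \<le> x u1" "v = x u1" by auto
      have vle: "v \<le> x u" if "u \<in> V" "t \<le> x u" for u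
        unfolding v_def using that finW by (intro Min_le) auto
      have SxE: "Sx t = Sx v" using vle u1 by (auto simp: Sx_def)
      have "{u\<in>Vb. t \<le> xb u} = Tst (Sx v)"
      proof
        show "{u\<in>Vb. t \<le> xb u} \<subseteq> Tst (Sx v)"
        proof
          fix b assume b: "b \<in> {u\<in>Vb. t \<le> xb u}"
          have "xb b \<in> Q b" unfolding xb_def using finQ inQ b by (intro Max_in) auto
          then obtain u where u: "u \<in> V" "b \<in> Tst (Sx (x u))" "xb b = x u" by (auto simp: Q_def)
          have "v \<le> x u" using vle u b by auto
          then have "Tst (Sx (x u)) \<subseteq> Tst (Sx v)" by (intro Tmono Sxmono SxV)
          then show "b \<in> Tst (Sx v)" using u by auto
        qed
        show "Tst (Sx v) \<subseteq> {u\<in>Vb. t \<le> xb u}"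
        proof
          fix b assume b: "b \<in> Tst (Sx v)"
          have bVb: "b \<in> Vb" using b PT[of "Sx v"] by (auto simp: P_def)
          have "x u1 \<in> Q b" using u1 b by (auto simp: Q_def)
          then have "x u1 \<le> xb b" unfolding xb_def using finQ by (intro Max_ge) auto
          then show "b \<in> {u\<in>Vb. t \<le> xb u}" using bVb u1 by auto
        qed
      qed
      then have "{u\<in>V \<union> Vb. t \<le> z xb u} = Sx v \<union> Tst (Sx v)"
        using split[of t xb] SxE by (simp add: Sx_def)
      then show ?thesis using PT[of "Sx v"] SxE by (simp add: P_def)
    next
      case nf: False
      have "{u\<in>Vb. t \<le> xb u} = {}"
      proof (rule ccontr)
        assume "{u\<in>Vb. t \<le> xb u} \<noteq> {}"
        then obtain b where b: "b \<in> Vb" "t \<le> xb b" by auto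
        have "xb b \<in> Q b" unfolding xb_def using finQ inQ b by (intro Max_in) auto
        then obtain u where "u \<in> V" "xb b = x u" by (auto simp: Q_def)
        then show False using nf b by auto
      qed
      moreover have "Sx t = {}" using nf by (auto simp: Sx_def)
      ultimately have e: "{u\<in>V \<union> Vb. t \<le> z xb u} = {}" using split[of t xb] by (simp add: Sx_def)
      show ?thesis unfolding e using G0 F0 \<open>Sx t = {}\<close> by simp
    qed
    show ?thesis using eqI[of xb] key by (auto simp: Sx_def)
  qed
  show ?thesis using part1 part2 unfolding z_def by simp
qed

end
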